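(* For every combinatorial auction with $d$-SOS valuations ($d\ge1$) over single-dimensional signals $s_i\in\{0,1,\dots,k-1\}$ ($k\ge2$), the mechanism that runs Random Threshold with probability $\frac{(k-1)d}{d(k+1)+2}$ and Random Sampling otherwise is universally ex-post IC-IR and gives a $(d(k+1)+2)$-approximation to the optimal social welfare.
   Context: Setting: $n$ agents, $m$ items; agent $i$ has private signal $s_i$; value for bundle $T$ is $v_{iT}(\mathbf{s})\ge0$, public, weakly increasing in each coordinate, strictly in $s_i$; each $v_{iT}$ is $d$-SOS: for every coordinate $j$, $s_j$, $\delta\ge0$, $\mathbf{s}'_{-j}\le\mathbf{s}_{-j}$ coordinate-wise, $d\big(v(\mathbf{s}'_{-j},s_j+\delta)-v(\mathbf{s}'_{-j},s_j)\big)\ge v(\mathbf{s}_{-j},s_j+\delta)-v(\mathbf{s}_{-j},s_j)$. Allocations assign disjoint bundles. Random Threshold: choose $\ell$ uniformly in $\{1,\dots,k-1\}$; $N_{\ge\ell}=\{i:s_i\ge\ell\}$, $N_{<\ell}$ the rest; for $i\in N_{\ge\ell}$, $\bar v_{iT}=v_{iT}(\mathbf{s}_{N_{<\ell}},\boldsymbol{\ell}_{N_{\ge\ell}})$, else $0$; allocate a $\bar v$-welfare-maximizing allocation among $N_{\ge\ell}$; agent receiving $\bar T_i$ pays $v_{i\bar T_i}(\mathbf{s}_{-i},\ell-1)$. Random Sampling: split agents uniformly at random into $A,B$; for $i\in B$, $\tilde v_{iT}=v_{iT}(\mathbf{s}_A,\mathbf{0}_B)$, for $i\in A$, $0$; allocate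 a $\tilde v$-welfare-maximizing allocation among $B$; no payments. *)

theory Defs
  imports Main Complex_Main
begin

(* Agents are 0..<n, items are 0..<m, signals take values in {0..<k}.
   A valuation profile v i T s is agent i's value for bundle T at signal profile s. *)
type_synonym valuation = "nat \<Rightarrow> nat set \<Rightarrow> (nat \<Rightarrow> nat) \<Rightarrow> real"

definition profiles :: "nat \<Rightarrow> nat \<Rightarrow> (nat \<Rightarrow> nat) set" where
  "profiles n k = {s. (\<forall>i<n. s i < k) \<and> (\<forall>i. n \<le> i \<longrightarrow> s i = 0)}"

definition bval :: "valuation \<Rightarrow> nat \<Rightarrow> nat set \<Rightarrow> (nat \<Rightarrow> nat) \<Rightarrow> real" where
  "bval v i T s = (if T = {} then 0 else v i T s)"

definition dSOS_valuations :: "nat \<Rightarrow> nat \<Rightarrow> nat \<Rightarrow> real \<Rightarrow> valuation \<Rightarrow> bool" where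
  "dSOS_valuations n m k d v \<longleftrightarrow>
    (\<forall>i<n. \<forall>T. T \<noteq> {} \<and> T \<subseteq> {..<m} \<longrightarrow>
      (\<forall>s\<in>profiles n k. 0 \<le> v i T s) \<and>
      (\<forall>s\<in>profiles n k. \<forall>j<n. \<forall>t. s j \<le> t \<and> t < k \<longrightarrow> v i T s \<le> v i T (s(j := t))) \<and>
      (\<forall>s\<in>profiles n k. \<forall>t. s i < t \<and> t < k \<longrightarrow> v i T s < v i T (s(i := t))) \<and>
      (\<forall>s\<in>profiles n k. \<forall>s'\<in>profiles n k. \<forall>j<n. \<forall>\<delta>::nat.
         s j + \<delta> < k \<and> (\<forall>l. l \<noteq> j \<longrightarrow> s' l \<le> s l) \<longrightarrow>
         v i T (s(j := s j + \<delta>)) - v i T s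
           \<le> d * (v i T (s'(j := s j + \<delta>)) - v i T (s'(j := s j)))))"

definition feasible_alloc :: "nat \<Rightarrow> nat set \<Rightarrow> (nat \<Rightarrow> nat set) \<Rightarrow> bool" where
  "feasible_alloc m S X \<longleftrightarrow>
     (\<forall>i. X i \<subseteq> {..<m}) \<and> (\<forall>i. i \<notin> S \<longrightarrow> X i = {}) \<and>
     (\<forall>i j. i \<noteq> j \<longrightarrow> X i \<inter> X j = {})"

definition welfare_of :: "nat set \<Rightarrow> (nat \<Rightarrow> nat set \<Rightarrow> real) \<Rightarrow> (nat \<Rightarrow> nat set) \<Rightarrow> real" where
  "welfare_of S w X = (\<Sum>i\<in>S. if X i = {} then 0 else w i (X i))"

definition is_max_selector ::
  "nat \<Rightarrow> nat \<Rightarrow> (nat set \<Rightarrow> (nat \<Rightarrow> nat set \<Rightarrow> real) \<Rightarrow> nat \<Rightarrow> nat set) \<Rightarrow> bool" where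
  "is_max_selector n m sel \<longleftrightarrow>
    (\<forall>S w. S \<subseteq> {..<n} \<longrightarrow>
       feasible_alloc m S (sel S w) \<and>
       (\<forall>X. feasible_alloc m S X \<longrightarrow> welfare_of S w X \<le> welfare_of S w (sel S w)))"

(* Random Threshold with fixed threshold l, on reported profile r *)
definition RT_alloc ::
  "nat \<Rightarrow> valuation \<Rightarrow> (nat set \<Rightarrow> (nat \<Rightarrow> nat set \<Rightarrow> real) \<Rightarrow> nat \<Rightarrow> nat set) \<Rightarrow> nat
   \<Rightarrow> (nat \<Rightarrow> nat) \<Rightarrow> nat \<Rightarrow> nat set" where
  "RT_alloc n v sel l r =
     (let N = {i. i < n \<and> l \<le> r i};
          w = (\<lambda>i T. if i \<in> N then v i T (\<lambda>j. if j \<in> N then l else r j) else 0)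
      in sel N w)"

definition RT_pay ::
  "nat \<Rightarrow> valuation \<Rightarrow> (nat set \<Rightarrow> (nat \<Rightarrow> nat set \<Rightarrow> real) \<Rightarrow> nat \<Rightarrow> nat set) \<Rightarrow> nat
   \<Rightarrow> (nat \<Rightarrow> nat) \<Rightarrow> nat \<Rightarrow> real" where
  "RT_pay n v sel l r i =
     (let X = RT_alloc n v sel l r in
      if X i = {} then 0 else v i (X i) (r(i := l - 1)))"

(* Random Sampling with fixed partition: B the bidding side, A = complement *)
definition RS_alloc ::
  "valuation \<Rightarrow> (nat set \<Rightarrow> (nat \<Rightarrow> nat set \<Rightarrow> real) \<Rightarrow> nat \<Rightarrow> nat set) \<Rightarrow> nat set
   \<Rightarrow> (nat \<Rightarrow> nat) \<Rightarrow> nat \<Rightarrow> nat set" where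
  "RS_alloc v sel B r =
     sel B (\<lambda>i T. if i \<in> B then v i T (\<lambda>j. if j \<in> B then 0 else r j) else 0)"

definition ex_post_IC_IR ::
  "nat \<Rightarrow> nat \<Rightarrow> valuation \<Rightarrow> ((nat \<Rightarrow> nat) \<Rightarrow> nat \<Rightarrow> nat set)
   \<Rightarrow> ((nat \<Rightarrow> nat) \<Rightarrow> nat \<Rightarrow> real) \<Rightarrow> bool" where
  "ex_post_IC_IR n k v alloc pay \<longleftrightarrow>
    (\<forall>s\<in>profiles n k. \<forall>i<n.
       0 \<le> bval v i (alloc s i) s - pay s i \<and>
       (\<forall>t<k. bval v i (alloc (s(i := t)) i) s - pay (s(i := t)) i
              \<le> bval v i (alloc s i) s - pay s i))"

definition true_welfare :: "nat \<Rightarrow> valuation \<Rightarrow> (nat \<Rightarrow> nat) \<Rightarrow> (nat \<Rightarrow> nat set) \<Rightarrow> real" where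
  "true_welfare n v s X = welfare_of {..<n} (\<lambda>i T. v i T s) X"

(* expected welfare of the mixture: RT with prob. p (l uniform in {1..k-1}),
   RS with prob. 1-p (uniformly random partition, i.e. B uniform over subsets of agents) *)
definition mix_expected_welfare ::
  "nat \<Rightarrow> nat \<Rightarrow> valuation \<Rightarrow> (nat set \<Rightarrow> (nat \<Rightarrow> nat set \<Rightarrow> real) \<Rightarrow> nat \<Rightarrow> nat set)
   \<Rightarrow> (nat set \<Rightarrow> (nat \<Rightarrow> nat set \<Rightarrow> real) \<Rightarrow> nat \<Rightarrow> nat set) \<Rightarrow> real \<Rightarrow> (nat \<Rightarrow> nat) \<Rightarrow> real" where
  "mix_expected_welfare n k v selRT selRS p s =
     p * ((\<Sum>l\<in>{1..<k}. true_welfare n v s (RT_alloc n v selRT l s)) / real (k - 1))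
     + (1 - p) * ((\<Sum>B\<in>Pow {..<n}. true_welfare n v s (RS_alloc v selRS B s)) / 2 ^ n)"

end

theory Submission
  imports Defs
begin

definition upd :: "(nat \<Rightarrow> nat) \<Rightarrow> nat set \<Rightarrow> (nat \<Rightarrow> nat) \<Rightarrow> nat \<Rightarrow> nat" where
  "upd x C s = (\<lambda>j. if j \<in> C then s j else x j)"

context
  fixes n m k :: nat and d :: real and v :: valuation
  assumes dsos: "dSOS_valuations n m k d v" and k2: "k \<ge> 2" and d1: "d \<ge> 1"
begin

lemma D: "i < n \<Longrightarrow> T \<noteq> {} \<and> T \<subseteq> {..<m} \<Longrightarrow>
      (\<forall>s\<in>profiles n k. 0 \<le> v i T s) \<and>
      (\<forall>s\<in>profiles n k. \<forall>j<n. \<forall>t. s j \<le> t \<and> t < k \<longrightarrow> v i T s \<le> v i T (s(j := t))) \<and>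
      (\<forall>s\<in>profiles n k. \<forall>t. s i < t \<and> t < k \<longrightarrow> v i T s < v i T (s(i := t))) \<and>
      (\<forall>s\<in>profiles n k. \<forall>s'\<in>profiles n k. \<forall>j<n. \<forall>\<delta>::nat.
         s j + \<delta> < k \<and> (\<forall>l. l \<noteq> j \<longrightarrow> s' l \<le> s l) \<longrightarrow>
         v i T (s(j := s j + \<delta>)) - v i T s
           \<le> d * (v i T (s'(j := s j + \<delta>)) - v i T (s'(j := s j))))"
proof -
  assume a: "i < n" "T \<noteq> {} \<and> T \<subseteq> {..<m}"
  show ?thesis using dsos[unfolded dSOS_valuations_def, THEN spec, THEN mp, OF a(1), THEN spec, THEN mp, OF a(2)] .
qed

lemma nonneg: "i < n \<Longrightarrow> T \<noteq> {} \<Longrightarrow> T \<subseteq> {..<m} \<Longrightarrow> s \<in> profiles n k \<Longrightarrow> 0 \<le> v i T s"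
  using D[of i T] by blast

lemma mono1: "i < n \<Longrightarrow> T \<noteq> {} \<Longrightarrow> T \<subseteq> {..<m} \<Longrightarrow> s \<in> profiles n k \<Longrightarrow> j < n
   \<Longrightarrow> s j \<le> t \<Longrightarrow> t < k \<Longrightarrow> v i T s \<le> v i T (s(j := t))"
  using D[of i T] by blast

lemma sos: "i < n \<Longrightarrow> T \<noteq> {} \<Longrightarrow> T \<subseteq> {..<m} \<Longrightarrow> s \<in> profiles n k \<Longrightarrow> s' \<in> profiles n k
   \<Longrightarrow> j < n \<Longrightarrow> s j + \<delta> < k \<Longrightarrow> (\<forall>l. l \<noteq> j \<longrightarrow> s' l \<le> s l)
   \<Longrightarrow> v i T (s(j := s j + \<delta>)) - v i T s \<le> d * (v i T (s'(j := s j + \<delta>)) - v i T (s'(j := s j)))"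
proof -
  assume a: "i < n" "T \<noteq> {}" "T \<subseteq> {..<m}" "s \<in> profiles n k" "s' \<in> profiles n k" "j < n" "s j + \<delta> < k" "(\<forall>l. l \<noteq> j \<longrightarrow> s' l \<le> s l)"
  have "\<forall>s\<in>profiles n k. \<forall>s'\<in>profiles n k. \<forall>j<n. \<forall>\<delta>::nat.
         s j + \<delta> < k \<and> (\<forall>l. l \<noteq> j \<longrightarrow> s' l \<le> s l) \<longrightarrow>
         v i T (s(j := s j + \<delta>)) - v i T s
           \<le> d * (v i T (s'(j := s j + \<delta>)) - v i T (s'(j := s j)))" using D[of i T] a by blast
  then show ?thesis using a by blast
qed

lemma mono_path:
  assumes "i<n" "T\<noteq>{}" "T\<subseteq>{..<m}" "s\<in>profiles n k" "s'\<in>profiles n k" "\<forall>j. s j \<le> s' j"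
  shows "v i T s \<le> v i T (\<lambda>j. if j < q then s' j else s j)"
proof (induction q)
  case 0 then show ?case by simp
next
  case (Suc q)
  let ?p = "\<lambda>j. if j < q then s' j else s j"
  have p: "?p \<in> profiles n k" using assms(4,5) by (auto simp: profiles_def)
  show ?case
  proof (cases "q < n")
    case True
    have eq: "(\<lambda>j. if j < Suc q then s' j else s j) = ?p(q := s' q)" by (auto simp: fun_eq_iff)
    have "v i T ?p \<le> v i T (?p(q := s' q))"
      apply (rule mono1) using assms p True by (auto simp: profiles_def)
    then show ?thesis using Suc eq by simp
  next
    case False
    have eq: "(\<lambda>j. if j < Suc q then s' j else s j) = ?p"
      using False assms(4,5) by (auto simp: fun_eq_iff profiles_def less_Suc_eq)
    then show ?thesis using Suc by simp
  qed
qed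

lemma mono:
  assumes "i<n" "T\<noteq>{}" "T\<subseteq>{..<m}" "s\<in>profiles n k" "s'\<in>profiles n k" "\<forall>j. s j \<le> s' j"
  shows "v i T s \<le> v i T s'"
proof -
  have "(\<lambda>j. if j < n then s' j else s j) = s'" using assms(4,5) by (auto simp: fun_eq_iff profiles_def)
  then show ?thesis using mono_path[OF assms, of n] by simp
qed

lemma sos_set:
  assumes "i<n" "T\<noteq>{}" "T\<subseteq>{..<m}" "a \<in> profiles n k" "b \<in> profiles n k" "s \<in> profiles n k"
    "\<forall>j. a j \<le> b j" "finite C" "C \<subseteq> {..<n}" "\<forall>j\<in>C. a j = b j \<and> b j \<le> s j"
  shows "v i T (upd b C s) - v i T b \<le> d * (v i T (upd a C s) - v i T a)"
  using assms(8-10)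
proof (induction C rule: finite_induct)
  case empty then show ?case by (simp add: upd_def)
next
  case (insert c C)
  let ?b = "upd b C s" and ?a = "upd a C s"
  have pb: "?b \<in> profiles n k" using assms(5,6) insert.prems by (auto simp: profiles_def upd_def)
  have pa: "?a \<in> profiles n k" using assms(4,6) insert.prems by (auto simp: profiles_def upd_def)
  have c: "c < n" "a c = b c" "b c \<le> s c" "c \<notin> C" using insert by auto
  have bc: "?b c = b c" using c by (simp add: upd_def)
  have sck: "s c < k" using assms(6) c by (simp add: profiles_def)
  have eb: "upd b (insert c C) s = ?b(c := ?b c + (s c - b c))" using bc c by (auto simp: upd_def fun_eq_iff)
  have ea: "upd a (insert c C) s = ?a(c := ?b c + (s c - b c))" using bc c by (auto simp: upd_def fun_eq_iff)
  have ea0: "?a(c := ?b c) = ?a" using c by (auto simp: upd_def fun_eq_iff)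
  have le: "\<forall>l. l \<noteq> c \<longrightarrow> ?a l \<le> ?b l" using assms(7) by (simp add: upd_def)
  have step: "v i T (?b(c := ?b c + (s c - b c))) - v i T ?b
     \<le> d * (v i T (?a(c := ?b c + (s c - b c))) - v i T (?a(c := ?b c)))"
    by (rule sos[OF assms(1-3) pb pa c(1)]) (use bc c sck le in auto)
  have IH: "v i T ?b - v i T b \<le> d * (v i T ?a - v i T a)" using insert by auto
  have "v i T (upd b (insert c C) s) - v i T b
      = (v i T (?b(c := ?b c + (s c - b c))) - v i T ?b) + (v i T ?b - v i T b)" using eb by simp
  also have "\<dots> \<le> d * (v i T (?a(c := ?b c + (s c - b c))) - v i T ?a) + d * (v i T ?a - v i T a)"
    using step IH ea0 by simp
  also have "\<dots> = d * (v i T (upd a (insert c C) s) - v i T a)" using ea by (simp add: algebra_simps)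
  finally show ?case .
qed

lemma zero_prof: "(\<lambda>_. 0) \<in> profiles n k" using k2 by (simp add: profiles_def)

lemma upd_prof: "s \<in> profiles n k \<Longrightarrow> upd (\<lambda>_. 0) A s \<in> profiles n k"
  by (auto simp: profiles_def upd_def)

lemma rs_pair:
  assumes i: "i<n" and T: "T\<noteq>{}" "T\<subseteq>{..<m}" and s: "s \<in> profiles n k"
    and A: "A \<subseteq> {..<n} - {i}"
  shows "v i T (s(i:=0)) \<le> v i T (upd (\<lambda>_. 0) A s) + d * v i T (upd (\<lambda>_. 0) ({..<n} - {i} - A) s)"
proof -
  let ?O = "{..<n} - {i}"
  have 1: "upd (upd (\<lambda>_. 0) A s) (?O - A) s = s(i:=0)"
    using s A i by (auto simp: upd_def fun_eq_iff profiles_def)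
  have "v i T (upd (upd (\<lambda>_. 0) A s) (?O - A) s) - v i T (upd (\<lambda>_. 0) A s)
      \<le> d * (v i T (upd (\<lambda>_. 0) (?O - A) s) - v i T (\<lambda>_. 0))"
    apply (rule sos_set[OF i T zero_prof upd_prof[OF s] s])
    using A by (auto simp: upd_def)
  then have "v i T (s(i:=0)) - v i T (upd (\<lambda>_. 0) A s)
      \<le> d * (v i T (upd (\<lambda>_. 0) (?O - A) s) - v i T (\<lambda>_. 0))" unfolding 1 .
  moreover have "0 \<le> d * v i T (\<lambda>_. 0)" using nonneg[OF i T zero_prof] d1 by simp
  moreover have "d * (v i T (upd (\<lambda>_. 0) (?O - A) s) - v i T (\<lambda>_. 0))
     = d * v i T (upd (\<lambda>_. 0) (?O - A) s) - d * v i T (\<lambda>_. 0)" by (simp add: right_diff_distrib)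
  ultimately show ?thesis by linarith
qed

lemma rs_avg:
  assumes i: "i<n" and T: "T\<noteq>{}" "T\<subseteq>{..<m}" and s: "s \<in> profiles n k"
  shows "2 ^ (n - 1) * v i T (s(i:=0)) \<le> (1 + d) * (\<Sum>A\<in>Pow ({..<n} - {i}). v i T (upd (\<lambda>_. 0) A s))"
proof -
  let ?O = "{..<n} - {i}"
  let ?f = "\<lambda>A. v i T (upd (\<lambda>_. 0) A s)"
  have cO: "card (Pow ?O) = 2 ^ (n - 1)" using i by (simp add: card_Pow)
  have sw: "(\<Sum>A\<in>Pow ?O. ?f (?O - A)) = (\<Sum>A\<in>Pow ?O. ?f A)"
    by (rule sum.reindex_bij_witness[of _ "\<lambda>A. ?O - A" "\<lambda>A. ?O - A"]) auto
  have "real (card (Pow ?O)) * v i T (s(i:=0)) = (\<Sum>A\<in>Pow ?O. v i T (s(i:=0)))" by simp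
  also have "\<dots> \<le> (\<Sum>A\<in>Pow ?O. ?f A + d * ?f (?O - A))"
    by (rule sum_mono) (use rs_pair[OF i T s] in auto)
  also have "\<dots> = (1 + d) * (\<Sum>A\<in>Pow ?O. ?f A)"
    by (simp add: sum.distrib sum_distrib_left[symmetric] sw algebra_simps)
  finally show ?thesis using cO by simp
qed

lemma alloc_bound:
  assumes sel: "is_max_selector n m sel" and S: "S \<subseteq> {..<n}" and z: "z \<in> profiles n k"
    and s: "s \<in> profiles n k" and zs: "\<forall>j. z j \<le> s j" and X: "feasible_alloc m {..<n} X"
  shows "(\<Sum>i\<in>S. if X i = {} then 0 else v i (X i) z)
     \<le> true_welfare n v s (sel S (\<lambda>i T. if i \<in> S then v i T z else 0))"
proof -
  let ?w = "\<lambda>i T. if i \<in> S then v i T z else 0"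
  let ?Y = "sel S ?w"
  let ?X = "\<lambda>i. if i \<in> S then X i else {}"
  have fY: "feasible_alloc m S ?Y" and opt: "\<forall>X. feasible_alloc m S X \<longrightarrow> welfare_of S ?w X \<le> welfare_of S ?w ?Y"
    using sel S unfolding is_max_selector_def by blast+
  have fX: "feasible_alloc m S ?X" using X unfolding feasible_alloc_def by auto
  have "(\<Sum>i\<in>S. if X i = {} then 0 else v i (X i) z) = welfare_of S ?w ?X"
    unfolding welfare_of_def by (rule sum.cong) auto
  also have "\<dots> \<le> welfare_of S ?w ?Y" using opt fX by blast
  also have "\<dots> \<le> (\<Sum>i\<in>S. if ?Y i = {} then 0 else v i (?Y i) s)" unfolding welfare_of_def
  proof (rule sum_mono)
    fix i assume i: "i \<in> S"
    show "(if ?Y i = {} then 0 else ?w i (?Y i)) \<le> (if ?Y i = {} then 0 else v i (?Y i) s)"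
    proof (cases "?Y i = {}")
      case False
      have "?Y i \<subseteq> {..<m}" using fY unfolding feasible_alloc_def by blast
      then have "v i (?Y i) z \<le> v i (?Y i) s" using mono[OF _ False _ z s zs] i S by blast
      then show ?thesis using i False by simp
    qed simp
  qed
  also have "\<dots> \<le> true_welfare n v s ?Y" unfolding true_welfare_def welfare_of_def
    by (rule sum_mono2) (use S fY in \<open>auto simp: feasible_alloc_def\<close>)
  finally show ?thesis .
qed

lemma tele: fixes g :: "nat \<Rightarrow> real" and t :: nat
  shows "(\<Sum>l\<in>{1..t}. g l - g (l - 1)) = g t - g 0"
  by (induction t) (auto simp: atLeastAtMostSuc_conv)

lemma rt_agent:
  assumes i: "i<n" and T: "T\<noteq>{}" "T\<subseteq>{..<m}" and s: "s \<in> profiles n k"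
  shows "v i T s - v i T (s(i:=0)) \<le> d * (\<Sum>l\<in>{1..<k}. if l \<le> s i then
            v i T (\<lambda>j. if j \<in> {j. j < n \<and> l \<le> s j} then l else s j) else 0)"
proof -
  let ?z = "\<lambda>l. (\<lambda>j. if j \<in> {j. j < n \<and> l \<le> s j} then l else s j)"
  let ?g = "\<lambda>l. v i T (s(i:=l))"
  have sik: "s i < k" using s i by (simp add: profiles_def)
  have step: "?g l - ?g (l - 1) \<le> d * v i T (?z l)" if l: "1 \<le> l" "l \<le> s i" for l
  proof -
    have lk: "l < k" using l sik by simp
    have p: "s(i := l - 1) \<in> profiles n k" using s i lk by (auto simp: profiles_def)
    have pz: "?z l \<in> profiles n k" using s lk by (auto simp: profiles_def)
    have pz': "(?z l)(i := l - 1) \<in> profiles n k" using pz i lk by (auto simp: profiles_def)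
    have h: "v i T ((s(i := l - 1))(i := (s(i := l - 1)) i + 1)) - v i T (s(i := l - 1))
       \<le> d * (v i T ((?z l)(i := (s(i := l - 1)) i + 1)) - v i T ((?z l)(i := (s(i := l - 1)) i)))"
      by (rule sos[OF i T p pz i]) (use l lk in auto)
    have e1: "(s(i := l - 1))(i := (s(i := l - 1)) i + 1) = s(i:=l)" using l by simp
    have e2: "(?z l)(i := (s(i := l - 1)) i + 1) = ?z l" using l i by (auto simp: fun_eq_iff)
    have h2: "?g l - ?g (l - 1) \<le> d * (v i T (?z l) - v i T ((?z l)(i := l - 1)))"
      using h e1 e2 by simp
    have "0 \<le> d * v i T ((?z l)(i := l - 1))" using nonneg[OF i T pz'] d1 by simp
    moreover have "d * (v i T (?z l) - v i T ((?z l)(i := l - 1))) = d * v i T (?z l) - d * v i T ((?z l)(i := l - 1))"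
      by (simp add: right_diff_distrib)
    ultimately show ?thesis using h2 by linarith
  qed
  have fil: "{l \<in> {1..<k}. l \<le> s i} = {1..s i}" using sik by auto
  have "v i T s - v i T (s(i:=0)) = (\<Sum>l\<in>{1..s i}. ?g l - ?g (l - 1))"
    using tele[of ?g "s i"] by simp
  also have "\<dots> = (\<Sum>l\<in>{1..<k}. if l \<le> s i then ?g l - ?g (l - 1) else 0)"
    by (subst sum.inter_filter[symmetric]) (simp_all only: fil finite_atLeastLessThan)
  also have "\<dots> \<le> (\<Sum>l\<in>{1..<k}. if l \<le> s i then d * v i T (?z l) else 0)"
    by (rule sum_mono) (use step in auto)
  also have "\<dots> = d * (\<Sum>l\<in>{1..<k}. if l \<le> s i then v i T (?z l) else 0)"
    by (simp add: sum_distrib_left) (rule sum.cong, auto)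
  finally show ?thesis .
qed

lemma rt_total:
  assumes sel: "is_max_selector n m sel" and s: "s \<in> profiles n k" and X: "feasible_alloc m {..<n} X"
  shows "(\<Sum>i<n. (if X i = {} then 0 else v i (X i) s) - (if X i = {} then 0 else v i (X i) (s(i:=0))))
     \<le> d * (\<Sum>l\<in>{1..<k}. true_welfare n v s (RT_alloc n v sel l s))"
proof -
  let ?z = "\<lambda>l. (\<lambda>j. if j \<in> {j. j < n \<and> l \<le> s j} then l else s j)"
  let ?t = "\<lambda>i l. if X i = {} then 0 else if l \<le> s i then v i (X i) (?z l) else 0"
  have perl: "(\<Sum>i<n. ?t i l) \<le> true_welfare n v s (RT_alloc n v sel l s)" if l: "l \<in> {1..<k}" for l
  proof -
    let ?S = "{j. j < n \<and> l \<le> s j}"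
    have z: "?z l \<in> profiles n k" using s l by (auto simp: profiles_def)
    have zs: "\<forall>j. ?z l j \<le> s j" by auto
    have "(\<Sum>i<n. ?t i l) = (\<Sum>i\<in>?S. if X i = {} then 0 else v i (X i) (?z l))"
      by (rule sum.mono_neutral_cong_right) auto
    also have "\<dots> \<le> true_welfare n v s (sel ?S (\<lambda>i T. if i \<in> ?S then v i T (?z l) else 0))"
      by (rule alloc_bound[OF sel _ z s zs X]) auto
    also have "\<dots> = true_welfare n v s (RT_alloc n v sel l s)" by (simp add: RT_alloc_def Let_def)
    finally show ?thesis .
  qed
  have peri: "(if X i = {} then 0 else v i (X i) s) - (if X i = {} then 0 else v i (X i) (s(i:=0)))
      \<le> d * (\<Sum>l\<in>{1..<k}. ?t i l)" if i: "i < n" for i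
  proof (cases "X i = {}")
    case False
    have "X i \<subseteq> {..<m}" using X unfolding feasible_alloc_def by blast
    then show ?thesis using rt_agent[OF i False _ s] False by simp
  qed simp
  have "(\<Sum>i<n. (if X i = {} then 0 else v i (X i) s) - (if X i = {} then 0 else v i (X i) (s(i:=0))))
      \<le> (\<Sum>i<n. d * (\<Sum>l\<in>{1..<k}. ?t i l))" by (rule sum_mono) (use peri in auto)
  also have "\<dots> = d * (\<Sum>l\<in>{1..<k}. \<Sum>i<n. ?t i l)" by (simp add: sum_distrib_left[symmetric] sum.swap[of _ "{..<n}"])
  also have "\<dots> \<le> d * (\<Sum>l\<in>{1..<k}. true_welfare n v s (RT_alloc n v sel l s))"
    using d1 by (intro mult_left_mono sum_mono perl) auto
  finally show ?thesis .
qed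

lemma rs_total:
  assumes sel: "is_max_selector n m sel" and s: "s \<in> profiles n k" and X: "feasible_alloc m {..<n} X"
  shows "2 ^ n * (\<Sum>i<n. if X i = {} then 0 else v i (X i) (s(i:=0)))
     \<le> 2 * (1 + d) * (\<Sum>B\<in>Pow {..<n}. true_welfare n v s (RS_alloc v sel B s))"
proof -
  let ?p = "\<lambda>B. (\<lambda>j. if j \<in> B then 0 else s j)"
  let ?h = "\<lambda>i B. if X i = {} then 0 else v i (X i) (?p B)"
  have perB: "(\<Sum>i<n. if i \<in> B then ?h i B else 0) \<le> true_welfare n v s (RS_alloc v sel B s)"
    if B: "B \<in> Pow {..<n}" for B
  proof -
    have z: "?p B \<in> profiles n k" using s by (auto simp: profiles_def)
    have "(\<Sum>i<n. if i \<in> B then ?h i B else 0) = (\<Sum>i\<in>B. ?h i B)"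
      by (rule sum.mono_neutral_cong_right) (use B in auto)
    also have "\<dots> \<le> true_welfare n v s (RS_alloc v sel B s)"
      unfolding RS_alloc_def by (rule alloc_bound[OF sel _ z s _ X]) (use B in auto)
    finally show ?thesis .
  qed
  have peri: "2 ^ n * (if X i = {} then 0 else v i (X i) (s(i:=0)))
      \<le> 2 * (1 + d) * (\<Sum>B\<in>Pow {..<n}. if i \<in> B then ?h i B else 0)" if i: "i < n" for i
  proof -
    let ?O = "{..<n} - {i}"
    have "(\<Sum>B\<in>Pow {..<n}. if i \<in> B then ?h i B else 0) = (\<Sum>B\<in>{B\<in>Pow {..<n}. i \<in> B}. ?h i B)"
      by (rule sum.inter_filter[symmetric]) simp
    also have "\<dots> = (\<Sum>A\<in>Pow ?O. ?h i ({..<n} - A))"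
      by (rule sum.reindex_bij_witness[of _ "\<lambda>A. {..<n} - A" "\<lambda>B. {..<n} - B"]) (use i in \<open>auto simp: Diff_Diff_Int Int_absorb1\<close>)
    also have "\<dots> = (\<Sum>A\<in>Pow ?O. if X i = {} then 0 else v i (X i) (upd (\<lambda>_. 0) A s))"
    proof (rule sum.cong)
      fix A assume A: "A \<in> Pow ?O"
      have "?p ({..<n} - A) = upd (\<lambda>_. 0) A s" using A s by (auto simp: upd_def fun_eq_iff profiles_def)
      then show "?h i ({..<n} - A) = (if X i = {} then 0 else v i (X i) (upd (\<lambda>_. 0) A s))" by simp
    qed simp
    finally have eq: "(\<Sum>B\<in>Pow {..<n}. if i \<in> B then ?h i B else 0)
       = (\<Sum>A\<in>Pow ?O. if X i = {} then 0 else v i (X i) (upd (\<lambda>_. 0) A s))" .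
    have n2: "(2::real) ^ n = 2 * 2 ^ (n - 1)" using i by (cases n) auto
    show ?thesis
    proof (cases "X i = {}")
      case False
      have "X i \<subseteq> {..<m}" using X unfolding feasible_alloc_def by blast
      then have "2 ^ (n - 1) * v i (X i) (s(i:=0)) \<le> (1 + d) * (\<Sum>A\<in>Pow ?O. v i (X i) (upd (\<lambda>_. 0) A s))"
        using rs_avg[OF i False _ s] by simp
      then have h2: "2 * (2 ^ (n - 1) * v i (X i) (s(i:=0))) \<le> 2 * ((1 + d) * (\<Sum>A\<in>Pow ?O. v i (X i) (upd (\<lambda>_. 0) A s)))"
        by simp
      show ?thesis unfolding eq using False n2 h2 by (simp add: algebra_simps)
    qed (simp add: eq)
  qed
  have "2 ^ n * (\<Sum>i<n. if X i = {} then 0 else v i (X i) (s(i:=0)))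
      = (\<Sum>i<n. 2 ^ n * (if X i = {} then 0 else v i (X i) (s(i:=0))))" by (simp add: sum_distrib_left)
  also have "\<dots> \<le> (\<Sum>i<n. 2 * (1 + d) * (\<Sum>B\<in>Pow {..<n}. if i \<in> B then ?h i B else 0))"
    by (rule sum_mono) (use peri in auto)
  also have "\<dots> = 2 * (1 + d) * (\<Sum>B\<in>Pow {..<n}. \<Sum>i<n. if i \<in> B then ?h i B else 0)"
    by (simp add: sum_distrib_left[symmetric] sum.swap[of _ "{..<n}"])
  also have "\<dots> \<le> 2 * (1 + d) * (\<Sum>B\<in>Pow {..<n}. true_welfare n v s (RS_alloc v sel B s))"
    using d1 by (intro mult_left_mono sum_mono perB) auto
  finally show ?thesis .
qed

lemma RT_feas: "is_max_selector n m sel \<Longrightarrow> feasible_alloc m {j. j < n \<and> l \<le> r j} (RT_alloc n v sel l r)"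
proof -
  assume a: "is_max_selector n m sel"
  have sub: "{j. j < n \<and> l \<le> r j} \<subseteq> {..<n}" by auto
  have F: "feasible_alloc m {j. j < n \<and> l \<le> r j} (sel {j. j < n \<and> l \<le> r j} w)" for w
    using a sub unfolding is_max_selector_def by blast
  show ?thesis unfolding RT_alloc_def Let_def by (rule F)
qed

lemma RT_emp: "is_max_selector n m sel \<Longrightarrow> \<not> l \<le> r i \<Longrightarrow> RT_alloc n v sel l r i = {}"
  using RT_feas[of sel l r] unfolding feasible_alloc_def by auto

lemma RT_sub: "is_max_selector n m sel \<Longrightarrow> RT_alloc n v sel l r i \<subseteq> {..<m}"
  using RT_feas[of sel l r] unfolding feasible_alloc_def by auto

lemma RT_same: assumes "i < n" "l \<le> r i" "l \<le> t"
  shows "RT_alloc n v sel l (r(i:=t)) = RT_alloc n v sel l r"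
proof -
  have N: "{j. j < n \<and> l \<le> (r(i:=t)) j} = {j. j < n \<and> l \<le> r j}" using assms by auto
  have P: "(\<lambda>j. if j \<in> {j. j < n \<and> l \<le> r j} then l else (r(i:=t)) j)
         = (\<lambda>j. if j \<in> {j. j < n \<and> l \<le> r j} then l else r j)" using assms by (auto simp: fun_eq_iff)
  show ?thesis unfolding RT_alloc_def Let_def N P ..
qed

lemma rt_ic:
  assumes sel: "is_max_selector n m sel" and l: "l \<in> {1..<k}"
  shows "ex_post_IC_IR n k v (RT_alloc n v sel l) (RT_pay n v sel l)"
  unfolding ex_post_IC_IR_def
proof (intro ballI allI impI conjI)
  fix s i assume s: "s \<in> profiles n k" and i: "i < n"
  let ?X = "\<lambda>r. RT_alloc n v sel l r i"
  define \<phi> where "\<phi> Y = (if Y = {} then 0 else v i Y s - v i Y (s(i:=l-1)))" for Y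
  have U: "bval v i (?X (s(i:=t))) s - RT_pay n v sel l (s(i:=t)) i = \<phi> (?X (s(i:=t)))" for t
    unfolding \<phi>_def bval_def RT_pay_def Let_def by simp
  have U0: "bval v i (?X s) s - RT_pay n v sel l s i = \<phi> (?X s)"
    using U[of "s i"] by simp
  have lk: "l - 1 < k" "l < k" using l by auto
  have pos: "0 \<le> \<phi> Y" if "l \<le> s i" "Y \<subseteq> {..<m}" for Y
  proof (cases "Y = {}")
    case False
    have p: "s(i:=l-1) \<in> profiles n k" using s i lk by (auto simp: profiles_def)
    have "v i Y (s(i:=l-1)) \<le> v i Y ((s(i:=l-1))(i := s i))"
      by (rule mono1[OF i False that(2) p i]) (use that s i in \<open>auto simp: profiles_def\<close>)
    then show ?thesis using False by (simp add: \<phi>_def)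
  qed (simp add: \<phi>_def)
  have neg: "\<phi> Y \<le> 0" if "\<not> l \<le> s i" "Y \<subseteq> {..<m}" for Y
  proof (cases "Y = {}")
    case False
    have "v i Y s \<le> v i Y (s(i := l - 1))"
      by (rule mono1[OF i False that(2) s i]) (use that lk in auto)
    then show ?thesis using False by (simp add: \<phi>_def)
  qed (simp add: \<phi>_def)
  have T0: "0 \<le> \<phi> (?X s)"
  proof (cases "l \<le> s i")
    case True then show ?thesis using pos RT_sub[OF sel] by blast
  next
    case False then show ?thesis using RT_emp[OF sel, of l s i] by (simp add: \<phi>_def)
  qed
  show "0 \<le> bval v i (?X s) s - RT_pay n v sel l s i" using U0 T0 by simp
  fix t assume t: "t < k"
  have "\<phi> (?X (s(i:=t))) \<le> \<phi> (?X s)"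
  proof (cases "l \<le> t")
    case False
    then have "?X (s(i:=t)) = {}" using RT_emp[OF sel, of l "s(i:=t)" i] by simp
    then show ?thesis using T0 by (simp add: \<phi>_def)
  next
    case True
    show ?thesis
    proof (cases "l \<le> s i")
      case True2: True
      then show ?thesis using RT_same[of i l s t sel] i True2 True by simp
    next
      case False
      then show ?thesis using neg[OF False RT_sub[OF sel]] T0 by (meson order_trans)
    qed
  qed
  then show "bval v i (?X (s(i:=t))) s - RT_pay n v sel l (s(i:=t)) i
      \<le> bval v i (?X s) s - RT_pay n v sel l s i" using U U0 by simp
qed

lemma rs_ic:
  assumes sel: "is_max_selector n m sel" and B: "B \<subseteq> {..<n}"
  shows "ex_post_IC_IR n k v (RS_alloc v sel B) (\<lambda>_ _. 0)"
  unfolding ex_post_IC_IR_def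
proof (intro ballI allI impI conjI)
  fix s i assume s: "s \<in> profiles n k" and i: "i < n"
  have fe: "feasible_alloc m B (RS_alloc v sel B r)" for r
    using sel B unfolding RS_alloc_def is_max_selector_def by blast
  show "0 \<le> bval v i (RS_alloc v sel B s i) s - 0"
    using fe[of s] nonneg[OF i _ _ s] unfolding bval_def feasible_alloc_def by auto
  fix t assume t: "t < k"
  have "RS_alloc v sel B (s(i:=t)) i = RS_alloc v sel B s i"
  proof (cases "i \<in> B")
    case True
    define Q where "Q r = (\<lambda>j. if j \<in> B then 0 else r j)" for r :: "nat \<Rightarrow> nat"
    have R: "RS_alloc v sel B r = sel B (\<lambda>i' T. if i' \<in> B then v i' T (Q r) else 0)" for r
      unfolding RS_alloc_def Q_def ..
    have "Q (s(i:=t)) = Q s" using True by (auto simp: fun_eq_iff Q_def)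
    then show ?thesis unfolding R by (simp only:)
  next
    case False then show ?thesis using fe[of s] fe[of "s(i:=t)"] unfolding feasible_alloc_def by auto
  qed
  then show "bval v i (RS_alloc v sel B (s(i:=t)) i) s - 0 \<le> bval v i (RS_alloc v sel B s i) s - 0" by simp
qed

end


lemma alg:
  fixes D K d R Z :: real
  assumes "D > 0" "K > 0" "D = d * (K + 2) + 2"
  shows "D * ((K * d / D) * (R / K) + (1 - K * d / D) * Z) = d * R + (2 * d + 2) * Z"
proof -
  have a: "D * ((K * d / D) * (R / K)) = d * R" using assms(1,2) by (simp add: field_simps)
  have b: "D * (1 - K * d / D) = 2 * d + 2" using assms by (simp add: field_simps)
  have "D * ((K * d / D) * (R / K) + (1 - K * d / D) * Z) = D * ((K * d / D) * (R / K)) + (D * (1 - K * d / D)) * Z"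
    by (simp add: algebra_simps)
  then show ?thesis using a b by simp
qed

theorem mainTheorem15:
  fixes n m k :: nat and d :: real and v :: valuation
    and selRT selRS :: "nat set \<Rightarrow> (nat \<Rightarrow> nat set \<Rightarrow> real) \<Rightarrow> nat \<Rightarrow> nat set"
  assumes "k \<ge> 2" and "d \<ge> 1"
    and "dSOS_valuations n m k d v"
    and "is_max_selector n m selRT" and "is_max_selector n m selRS"
  shows "(\<forall>l\<in>{1..<k}. ex_post_IC_IR n k v (RT_alloc n v selRT l) (RT_pay n v selRT l))
       \<and> (\<forall>B. B \<subseteq> {..<n} \<longrightarrow> ex_post_IC_IR n k v (RS_alloc v selRS B) (\<lambda>_ _. 0))
       \<and> (\<forall>s\<in>profiles n k. \<forall>X. feasible_alloc m {..<n} X \<longrightarrow>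
            true_welfare n v s X
              \<le> (d * (real k + 1) + 2) *
                 mix_expected_welfare n k v selRT selRS
                   ((real k - 1) * d / (d * (real k + 1) + 2)) s)"
proof (intro conjI ballI allI impI)
  fix l assume "l \<in> {1..<k}"
  then show "ex_post_IC_IR n k v (RT_alloc n v selRT l) (RT_pay n v selRT l)"
    using rt_ic[OF assms(3,1,2,4)] by blast
next
  fix B :: "nat set" assume "B \<subseteq> {..<n}"
  then show "ex_post_IC_IR n k v (RS_alloc v selRS B) (\<lambda>_ _. 0)"
    using rs_ic[OF assms(3,1,2,5)] by blast
next
  fix s X assume s: "s \<in> profiles n k" and X: "feasible_alloc m {..<n} X"
  define val where "val i = (if X i = {} then 0 else v i (X i) s)" for i
  define val0 where "val0 i = (if X i = {} then 0 else v i (X i) (s(i:=0)))" for i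
  define R where "R = (\<Sum>l\<in>{1..<k}. true_welfare n v s (RT_alloc n v selRT l s))"
  define Q where "Q = (\<Sum>B\<in>Pow {..<n}. true_welfare n v s (RS_alloc v selRS B s))"
  have h1: "(\<Sum>i<n. val i - val0 i) \<le> d * R"
    unfolding R_def val_def val0_def by (rule rt_total[OF assms(3,1,2,4) s X])
  have h2: "2 ^ n * (\<Sum>i<n. val0 i) \<le> 2 * (1 + d) * Q"
    unfolding Q_def val0_def by (rule rs_total[OF assms(3,1,2,5) s X])
  have h2': "(\<Sum>i<n. val0 i) \<le> (2 * d + 2) * (Q / 2 ^ n)"
    using h2 by (simp add: field_simps)
  have opt: "true_welfare n v s X = (\<Sum>i<n. val i - val0 i) + (\<Sum>i<n. val0 i)"
    unfolding true_welfare_def welfare_of_def val_def val0_def by (simp add: sum_subtractf)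
  have Dpos: "d * (real k + 1) + 2 > 0" using assms(2) by (simp add: add_pos_pos)
  have Kpos: "real k - 1 > 0" using assms(1) by simp
  have rk: "real (k - 1) = real k - 1" using assms(1) by simp
  have eq: "(d * (real k + 1) + 2) * mix_expected_welfare n k v selRT selRS
                   ((real k - 1) * d / (d * (real k + 1) + 2)) s = d * R + (2 * d + 2) * (Q / 2 ^ n)"
    unfolding mix_expected_welfare_def R_def[symmetric] Q_def[symmetric] rk
    by (rule alg[OF Dpos Kpos]) (simp add: algebra_simps)
  show "true_welfare n v s X \<le> (d * (real k + 1) + 2) * mix_expected_welfare n k v selRT selRS
                   ((real k - 1) * d / (d * (real k + 1) + 2)) s"
    unfolding eq opt using h1 h2' by linarith
qed

end
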